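(* Let $\Omega = [a,b)$ be a bounded interval with periodic boundary conditions, let $k \ge 0$ be an integer, let $T_k$ be the space of real-valued trigonometric polynomials on $\Omega$ of degree at most $k$, and let $P$ denote the $L^2(\Omega)$-orthogonal projection onto $T_k$. Let $u \colon I \to T_k$ (with $I$ an open time interval) be a continuously differentiable solution of the Fourier Galerkin semidiscretization of the Benjamin-Bona-Mahony equation \[ \partial_t u = -(\operatorname{I} - \partial_x^2)^{-1} \partial_x P \frac{u^2}{2}. \] Then the mass, momentum, and energy \[ \mathcal{M} = \int_\Omega u \,\mathrm{d}x, \qquad \mathcal{P} = \int_\Omega \Bigl( \tfrac{1}{2} u^2 + \tfrac{1}{2} (u_x)^2 \Bigr) \mathrm{d}x, \qquad \mathcal{E} = \int_\Omega \tfrac{1}{6} u^3 \,\mathrm{d}x \] are constant in time along $u$.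
   Context: $(\operatorname{I} - \partial_x^2)^{-1}$ denotes the inverse of $\operatorname{I} - \partial_x^2$ acting on periodic functions on $\Omega$; it maps $T_k$ to itself. The semidiscretization is an ODE on the finite-dimensional space $T_k$. *)

theory Defs
  imports "HOL-Analysis.Analysis"
begin

text \<open>Real trigonometric polynomials of degree at most k on the periodic interval [a,b),
  viewed as (b-a)-periodic functions on the whole real line.\<close>
definition trig_poly :: "real \<Rightarrow> real \<Rightarrow> nat \<Rightarrow> (real \<Rightarrow> real) \<Rightarrow> bool" where
  "trig_poly a b k f \<longleftrightarrow>
     (\<exists>c s :: nat \<Rightarrow> real. \<forall>x. f x = c 0 +
        (\<Sum>j=1..k. c j * cos (2 * pi * real j * (x - a) / (b - a))
                  + s j * sin (2 * pi * real j * (x - a) / (b - a))))"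

definition l2_proj :: "real \<Rightarrow> real \<Rightarrow> nat \<Rightarrow> (real \<Rightarrow> real) \<Rightarrow> (real \<Rightarrow> real)" where
  "l2_proj a b k f = (THE p. trig_poly a b k p \<and>
      (\<forall>q. trig_poly a b k q \<longrightarrow> integral {a..b} (\<lambda>x. (f x - p x) * q x) = 0))"

definition helm_inv :: "real \<Rightarrow> real \<Rightarrow> nat \<Rightarrow> (real \<Rightarrow> real) \<Rightarrow> (real \<Rightarrow> real)" where
  "helm_inv a b k g = (THE v. trig_poly a b k v \<and> (\<forall>x. v x - deriv (deriv v) x = g x))"

definition bbm_rhs :: "real \<Rightarrow> real \<Rightarrow> nat \<Rightarrow> (real \<Rightarrow> real) \<Rightarrow> (real \<Rightarrow> real)" where
  "bbm_rhs a b k v = (\<lambda>x. - helm_inv a b k (deriv (l2_proj a b k (\<lambda>y. (v y)^2 / 2))) x)"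

definition bbm_mass :: "real \<Rightarrow> real \<Rightarrow> (real \<Rightarrow> real) \<Rightarrow> real" where
  "bbm_mass a b v = integral {a..b} v"

definition bbm_momentum :: "real \<Rightarrow> real \<Rightarrow> (real \<Rightarrow> real) \<Rightarrow> real" where
  "bbm_momentum a b v = integral {a..b} (\<lambda>x. (v x)^2 / 2 + (deriv v x)^2 / 2)"

definition bbm_energy :: "real \<Rightarrow> real \<Rightarrow> (real \<Rightarrow> real) \<Rightarrow> real" where
  "bbm_energy a b v = integral {a..b} (\<lambda>x. (v x)^3 / 6)"

end

theory Submission
  imports Defs "HOL-Analysis.Analysis"
begin


locale bbm = fixes a b :: real and k :: nat assumes ab: "a < b"
begin

definition Cf :: "nat \<Rightarrow> real \<Rightarrow> real" where
  "Cf j x = cos (2 * pi * real j * (x - a) / (b - a))"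
definition Sf :: "nat \<Rightarrow> real \<Rightarrow> real" where
  "Sf j x = sin (2 * pi * real j * (x - a) / (b - a))"
definition om :: "nat \<Rightarrow> real" where
  "om j = 2 * pi * real j / (b - a)"
definition tp :: "(nat \<Rightarrow> real) \<Rightarrow> (nat \<Rightarrow> real) \<Rightarrow> real \<Rightarrow> real" where
  "tp c s x = (\<Sum>j\<le>k. c j * Cf j x + s j * Sf j x)"

lemma Cf_alt: "Cf j = (\<lambda>x. cos (om j * (x - a)))"
  unfolding Cf_def om_def by (auto simp: field_simps)
lemma Sf_alt: "Sf j = (\<lambda>x. sin (om j * (x - a)))"
  unfolding Sf_def om_def by (auto simp: field_simps)

lemma Cf_deriv: "(Cf j has_real_derivative (- om j * Sf j x)) (at x)"
  unfolding Cf_alt Sf_alt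
  by (auto intro!: derivative_eq_intros simp: field_simps)

lemma Sf_deriv: "(Sf j has_real_derivative (om j * Cf j x)) (at x)"
  unfolding Cf_alt Sf_alt
  by (auto intro!: derivative_eq_intros simp: field_simps)

lemma tp_deriv: "(tp c s has_real_derivative tp (\<lambda>j. om j * s j) (\<lambda>j. - om j * c j) x) (at x)"
proof -
  have "((\<lambda>x. \<Sum>j\<le>k. c j * Cf j x + s j * Sf j x) has_real_derivative
        (\<Sum>j\<le>k. c j * (- om j * Sf j x) + s j * (om j * Cf j x))) (at x)"
    by (intro DERIV_sum DERIV_add DERIV_cmult Cf_deriv Sf_deriv)
  moreover have "(\<Sum>j\<le>k. c j * (- om j * Sf j x) + s j * (om j * Cf j x))
     = tp (\<lambda>j. om j * s j) (\<lambda>j. - om j * c j) x"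
    unfolding tp_def by (intro sum.cong) (auto simp: algebra_simps)
  ultimately show ?thesis unfolding tp_def[abs_def] by simp
qed

lemma tp_deriv_eq: "deriv (tp c s) = tp (\<lambda>j. om j * s j) (\<lambda>j. - om j * c j)"
  using tp_deriv DERIV_imp_deriv by blast

lemma Cf_cont[continuous_intros]: "continuous_on S (Cf j)"
  unfolding Cf_alt by (intro continuous_intros)
lemma Sf_cont[continuous_intros]: "continuous_on S (Sf j)"
  unfolding Sf_alt by (intro continuous_intros)
lemma tp_cont[continuous_intros]: "continuous_on S (tp c s)"
  unfolding tp_def[abs_def] by (intro continuous_intros)

lemma Cf0[simp]: "Cf 0 x = 1" and Sf0[simp]: "Sf 0 x = 0"
  by (auto simp: Cf_def Sf_def)

lemma trig_poly_iff: "trig_poly a b k f \<longleftrightarrow> (\<exists>c s. f = tp c s)"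
proof
  assume "trig_poly a b k f"
  then obtain c s where cs: "\<And>x. f x = c 0 +
        (\<Sum>j=1..k. c j * cos (2 * pi * real j * (x - a) / (b - a))
                  + s j * sin (2 * pi * real j * (x - a) / (b - a)))"
    unfolding trig_poly_def by blast
  have "f x = tp c s x" for x
  proof -
    have "tp c s x = (\<Sum>j\<in>{0..k}. c j * Cf j x + s j * Sf j x)"
      unfolding tp_def by (simp add: atLeast0AtMost)
    also have "\<dots> = c 0 + (\<Sum>j\<in>{Suc 0..k}. c j * Cf j x + s j * Sf j x)"
      by (subst sum.atLeast_Suc_atMost) auto
    finally show ?thesis using cs by (simp add: Cf_def Sf_def)
  qed
  thus "\<exists>c s. f = tp c s" by blast
next
  assume "\<exists>c s. f = tp c s"
  then obtain c s where f: "f = tp c s" by blast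
  have "f x = c 0 +
        (\<Sum>j=1..k. c j * cos (2 * pi * real j * (x - a) / (b - a))
                  + s j * sin (2 * pi * real j * (x - a) / (b - a)))" for x
  proof -
    have "tp c s x = (\<Sum>j\<in>{0..k}. c j * Cf j x + s j * Sf j x)"
      unfolding tp_def by (simp add: atLeast0AtMost)
    also have "\<dots> = c 0 + (\<Sum>j\<in>{Suc 0..k}. c j * Cf j x + s j * Sf j x)"
      by (subst sum.atLeast_Suc_atMost) auto
    finally show ?thesis using f by (simp add: Cf_def Sf_def)
  qed
  thus "trig_poly a b k f" unfolding trig_poly_def by blast
qed

end

context bbm begin

definition omi :: "int \<Rightarrow> real" where "omi n = 2 * pi * of_int n / (b - a)"

lemma om_omi: "om j = omi (int j)" unfolding om_def omi_def by simp

lemma omi_L: "omi n * (b - a) = 2 * pi * of_int n"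
  using ab unfolding omi_def by (simp add: field_simps)

lemma ftc0:
  assumes "\<And>x. (F has_real_derivative f x) (at x)"
  shows "(f has_integral (F b - F a)) {a..b}"
  using ab assms
  by (intro fundamental_theorem_of_calculus)
     (auto simp: has_real_derivative_iff_has_vector_derivative[symmetric] intro: has_field_derivative_at_within)

lemma ftc_per:
  assumes "\<And>x. (F has_real_derivative f x) (at x)" "F b = F a"
  shows "integral {a..b} f = 0"
  using ftc0[OF assms(1)] assms(2) by (simp add: integral_unique)

lemma icos: "integral {a..b} (\<lambda>x. cos (omi n * (x - a))) = (if n = 0 then b - a else 0)"
proof (cases "n = 0")
  case True thus ?thesis using ab by (simp add: omi_def)
next
  case False
  hence nz: "omi n \<noteq> 0" using ab by (simp add: omi_def)
  have "((\<lambda>x. cos (omi n * (x - a))) has_integral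
        (sin (omi n * (b - a)) / omi n - sin (omi n * (a - a)) / omi n)) {a..b}"
    by (rule ftc0) (use nz in \<open>auto intro!: derivative_eq_intros\<close>)
  moreover have "sin (omi n * (b - a)) = 0" by (simp add: omi_L)
  ultimately show ?thesis using False by (simp add: integral_unique)
qed

lemma isin: "integral {a..b} (\<lambda>x. sin (omi n * (x - a))) = 0"
proof (cases "n = 0")
  case True thus ?thesis using ab by (simp add: omi_def)
next
  case False
  hence nz: "omi n \<noteq> 0" using ab by (simp add: omi_def)
  have "((\<lambda>x. sin (omi n * (x - a))) has_integral
        ((- cos (omi n * (b - a)) / omi n) - (- cos (omi n * (a - a)) / omi n))) {a..b}"
    by (rule ftc0) (use nz in \<open>auto intro!: derivative_eq_intros simp: field_simps\<close>)
  moreover have "cos (omi n * (b - a)) = 1" by (simp add: omi_L)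
  ultimately show ?thesis by (simp add: integral_unique)
qed

lemma int_half_sum:
  fixes f g :: "real \<Rightarrow> real"
  assumes "continuous_on {a..b} f" "continuous_on {a..b} g"
  shows "integral {a..b} (\<lambda>x. (f x + g x) / 2) = (integral {a..b} f + integral {a..b} g) / 2"
    and "integral {a..b} (\<lambda>x. (f x - g x) / 2) = (integral {a..b} f - integral {a..b} g) / 2"
  using assms by (simp_all add: integrable_continuous_interval integral_add integral_diff)

lemma CC: "integral {a..b} (\<lambda>x. Cf j x * Cf l x) = (if j = l then (if j = 0 then b - a else (b - a) / 2) else 0)"
proof -
  have "(\<lambda>x. Cf j x * Cf l x) = (\<lambda>x. (cos (omi (int j - int l) * (x - a)) + cos (omi (int j + int l) * (x - a))) / 2)"
    unfolding Cf_alt om_omi cos_times_cos by (auto simp: omi_def algebra_simps add_divide_distrib diff_divide_distrib)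
  note eq = this
  have "integral {a..b} (\<lambda>x. Cf j x * Cf l x) = (integral {a..b} (\<lambda>x. cos (omi (int j - int l) * (x - a)))
     + integral {a..b} (\<lambda>x. cos (omi (int j + int l) * (x - a)))) / 2"
    unfolding eq by (rule int_half_sum) (auto intro!: continuous_intros)
  thus ?thesis unfolding icos using ab by auto
qed

lemma SS: "integral {a..b} (\<lambda>x. Sf j x * Sf l x) = (if j = l \<and> j \<noteq> 0 then (b - a) / 2 else 0)"
proof -
  have "(\<lambda>x. Sf j x * Sf l x) = (\<lambda>x. (cos (omi (int j - int l) * (x - a)) - cos (omi (int j + int l) * (x - a))) / 2)"
    unfolding Sf_alt om_omi sin_times_sin by (auto simp: omi_def algebra_simps add_divide_distrib diff_divide_distrib)
  note eq = this
  have "integral {a..b} (\<lambda>x. Sf j x * Sf l x) = (integral {a..b} (\<lambda>x. cos (omi (int j - int l) * (x - a)))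
     - integral {a..b} (\<lambda>x. cos (omi (int j + int l) * (x - a)))) / 2"
    unfolding eq by (rule int_half_sum) (auto intro!: continuous_intros)
  thus ?thesis unfolding icos using ab by auto
qed

lemma SC: "integral {a..b} (\<lambda>x. Sf j x * Cf l x) = 0"
proof -
  have "(\<lambda>x. Sf j x * Cf l x) = (\<lambda>x. (sin (omi (int j + int l) * (x - a)) + sin (omi (int j - int l) * (x - a))) / 2)"
    unfolding Sf_alt Cf_alt om_omi sin_times_cos by (auto simp: omi_def algebra_simps add_divide_distrib diff_divide_distrib)
  note eq = this
  have "integral {a..b} (\<lambda>x. Sf j x * Cf l x) = (integral {a..b} (\<lambda>x. sin (omi (int j + int l) * (x - a)))
     + integral {a..b} (\<lambda>x. sin (omi (int j - int l) * (x - a)))) / 2"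
    unfolding eq by (rule int_half_sum) (auto intro!: continuous_intros)
  thus ?thesis unfolding isin by auto
qed

lemma CS: "integral {a..b} (\<lambda>x. Cf j x * Sf l x) = 0"
  using SC[of l j] by (simp add: mult.commute)

end

context bbm begin

lemma int_mult_tp:
  assumes h: "continuous_on {a..b} h"
  shows "integral {a..b} (\<lambda>x. h x * tp c s x) =
    (\<Sum>j\<le>k. c j * integral {a..b} (\<lambda>x. h x * Cf j x) + s j * integral {a..b} (\<lambda>x. h x * Sf j x))"
proof -
  have eq: "(\<lambda>x. h x * tp c s x) = (\<lambda>x. \<Sum>j\<le>k. c j * (h x * Cf j x) + s j * (h x * Sf j x))"
    unfolding tp_def by (auto simp: sum_distrib_left algebra_simps)
  have ic: "(\<lambda>x. h x * Cf j x) integrable_on {a..b}" for j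
    by (intro integrable_continuous_interval continuous_intros h)
  have iss: "(\<lambda>x. h x * Sf j x) integrable_on {a..b}" for j
    by (intro integrable_continuous_interval continuous_intros h)
  have "integral {a..b} (\<lambda>x. \<Sum>j\<le>k. c j * (h x * Cf j x) + s j * (h x * Sf j x))
     = (\<Sum>j\<le>k. integral {a..b} (\<lambda>x. c j * (h x * Cf j x) + s j * (h x * Sf j x)))"
    by (intro integral_sum) (auto intro!: integrable_continuous_interval continuous_intros h)
  also have "\<dots> = (\<Sum>j\<le>k. c j * integral {a..b} (\<lambda>x. h x * Cf j x) + s j * integral {a..b} (\<lambda>x. h x * Sf j x))"
    by (intro sum.cong refl, subst integral_add) (auto intro!: integrable_continuous_interval continuous_intros h)
  finally show ?thesis unfolding eq .
qed

lemma IPc: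
  assumes "l \<le> k"
  shows "integral {a..b} (\<lambda>x. tp c s x * Cf l x) = (if l = 0 then b - a else (b - a) / 2) * c l"
proof -
  have "integral {a..b} (\<lambda>x. tp c s x * Cf l x) = integral {a..b} (\<lambda>x. Cf l x * tp c s x)"
    by (simp add: mult.commute)
  also have "\<dots> = (\<Sum>j\<le>k. c j * integral {a..b} (\<lambda>x. Cf l x * Cf j x) + s j * integral {a..b} (\<lambda>x. Cf l x * Sf j x))"
    by (rule int_mult_tp) (intro continuous_intros)
  also have "\<dots> = (\<Sum>j\<le>k. if l = j then c j * (if l = 0 then b - a else (b - a) / 2) else 0)"
    unfolding CC CS by (intro sum.cong) auto
  also have "\<dots> = (if l = 0 then b - a else (b - a) / 2) * c l" using assms by simp
  finally show ?thesis .
qed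

lemma IPs:
  assumes "l \<le> k"
  shows "integral {a..b} (\<lambda>x. tp c s x * Sf l x) = (if l = 0 then 0 else (b - a) / 2) * s l"
proof -
  have "integral {a..b} (\<lambda>x. tp c s x * Sf l x) = integral {a..b} (\<lambda>x. Sf l x * tp c s x)"
    by (simp add: mult.commute)
  also have "\<dots> = (\<Sum>j\<le>k. c j * integral {a..b} (\<lambda>x. Sf l x * Cf j x) + s j * integral {a..b} (\<lambda>x. Sf l x * Sf j x))"
    by (rule int_mult_tp) (intro continuous_intros)
  also have "\<dots> = (\<Sum>j\<le>k. if l = j then s j * (if l = 0 then 0 else (b - a) / 2) else 0)"
    unfolding SS SC by (intro sum.cong) auto
  also have "\<dots> = (if l = 0 then 0 else (b - a) / 2) * s l" using assms by simp
  finally show ?thesis .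
qed

lemma tp_norm:
  "integral {a..b} (\<lambda>x. tp c s x * tp c s x) =
     (\<Sum>j\<le>k. (if j = 0 then b - a else (b - a) / 2) * (c j)^2 + (if j = 0 then 0 else (b - a) / 2) * (s j)^2)"
proof -
  have "integral {a..b} (\<lambda>x. tp c s x * tp c s x) =
    (\<Sum>j\<le>k. c j * integral {a..b} (\<lambda>x. tp c s x * Cf j x) + s j * integral {a..b} (\<lambda>x. tp c s x * Sf j x))"
    by (rule int_mult_tp) (intro continuous_intros)
  also have "\<dots> = (\<Sum>j\<le>k. (if j = 0 then b - a else (b - a) / 2) * (c j)^2 + (if j = 0 then 0 else (b - a) / 2) * (s j)^2)"
    by (intro sum.cong) (auto simp: IPc IPs power2_eq_square)
  finally show ?thesis .
qed

lemma tp_zero: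
  assumes "integral {a..b} (\<lambda>x. tp c s x * tp c s x) = 0"
  shows "tp c s x = 0"
proof -
  have nn: "\<And>j. 0 \<le> (if j = 0 then b - a else (b - a) / 2) * (c j)^2 + (if j = 0 then 0 else (b - a) / 2) * (s j)^2"
    using ab by auto
  have "\<forall>j\<in>{..k}. (if j = 0 then b - a else (b - a) / 2) * (c j)^2 + (if j = 0 then 0 else (b - a) / 2) * (s j)^2 = 0"
    using assms unfolding tp_norm by (subst (asm) sum_nonneg_eq_0_iff) (use nn in auto)
  hence z: "c j * Cf j x + s j * Sf j x = 0" if "j \<le> k" for j
  proof -
    have "((if j = 0 then b - a else (b - a) / 2) = 0 \<or> c j = 0) \<and>
         ((if j = 0 then 0 else (b - a) / 2) = 0 \<or> s j = 0)"
    proof -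
      have e: "(if j = 0 then b - a else (b - a) / 2) * (c j)^2 + (if j = 0 then 0 else (b - a) / 2) * (s j)^2 = 0"
        using \<open>\<forall>j\<in>{..k}. _\<close> that by auto
      have "0 \<le> (if j = 0 then b - a else (b - a) / 2) * (c j)^2" "0 \<le> (if j = 0 then 0 else (b - a) / 2) * (s j)^2"
        using ab by auto
      with e have "(if j = 0 then b - a else (b - a) / 2) * (c j)^2 = 0" "(if j = 0 then 0 else (b - a) / 2) * (s j)^2 = 0"
        by linarith+
      thus ?thesis by simp
    qed
    thus ?thesis using ab by (cases "j = 0") auto
  qed
  show ?thesis unfolding tp_def by (intro sum.neutral) (use z in auto)
qed

end

context bbm begin

definition NN :: nat where "NN = 2 * k + 1"
definition xm :: "nat \<Rightarrow> real" where "xm m = a + real m * (b - a) / real NN"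

lemma omi_xm: "omi n * (xm m - a) = (2 * pi * of_int n / real NN) * real m"
proof -
  have "real NN > 0" by (simp add: NN_def)
  thus ?thesis using ab unfolding omi_def xm_def by (simp add: field_simps)
qed

lemma tele_sin:
  "sin (t * real m + t / 2) - sin (t * real m - t / 2) = 2 * sin (t / 2) * cos (t * real m)"
  by (simp add: sin_add sin_diff)
lemma tele_cos:
  "cos (t * real m - t / 2) - cos (t * real m + t / 2) = 2 * sin (t / 2) * sin (t * real m)"
  by (simp add: cos_add cos_diff)

lemma half_nz:
  fixes n :: int
  assumes "n \<noteq> 0" "\<bar>n\<bar> < int NN"
  shows "sin ((2 * pi * of_int n / real NN) / 2) \<noteq> 0"
proof
  assume "sin ((2 * pi * of_int n / real NN) / 2) = 0"
  then obtain i :: int where i: "(2 * pi * of_int n / real NN) / 2 = of_int i * pi"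
    unfolding sin_zero_iff_int2 by blast
  have NNpos: "real NN > 0" by (simp add: NN_def)
  hence "of_int n = of_int i * real NN" using i by (simp add: field_simps)
  hence ni: "n = i * int NN" by (metis of_int_eq_iff of_int_mult of_int_of_nat_eq)
  with assms(1) have "i \<noteq> 0" by auto
  hence "\<bar>n\<bar> \<ge> int NN" unfolding ni abs_mult by (simp add: NN_def mult_le_cancel_right1)
  with assms(2) show False by simp
qed

lemma dcos:
  fixes n :: int
  assumes "\<bar>n\<bar> < int NN"
  shows "(\<Sum>m<NN. cos (omi n * (xm m - a))) = (if n = 0 then real NN else 0)"
proof (cases "n = 0")
  case True thus ?thesis by (simp add: omi_def)
next
  case False
  define t where "t = 2 * pi * of_int n / real NN"
  have tN: "t * real NN = 2 * pi * of_int n" unfolding t_def by (simp add: NN_def)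
  have nz: "sin (t / 2) \<noteq> 0" unfolding t_def by (rule half_nz[OF False assms])
  define f where "f m = sin (t * real m - t / 2)" for m
  have fs: "f (Suc m) - f m = 2 * sin (t / 2) * cos (t * real m)" for m
  proof -
    have "t * real (Suc m) - t / 2 = t * real m + t / 2" by (simp add: algebra_simps)
    thus ?thesis unfolding f_def using tele_sin[of t m] by (simp add: add.commute)
  qed
  have "2 * sin (t / 2) * (\<Sum>m<NN. cos (omi n * (xm m - a))) = (\<Sum>m<NN. f (Suc m) - f m)"
    unfolding fs sum_distrib_left omi_xm t_def by simp
  also have "\<dots> = f NN - f 0" by (rule sum_lessThan_telescope)
  also have "\<dots> = 0" unfolding f_def tN
    by (simp add: sin_diff)
  finally show ?thesis using nz False by simp
qed

lemma dsin:
  fixes n :: int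
  assumes "\<bar>n\<bar> < int NN"
  shows "(\<Sum>m<NN. sin (omi n * (xm m - a))) = 0"
proof (cases "n = 0")
  case True thus ?thesis by (simp add: omi_def)
next
  case False
  define t where "t = 2 * pi * of_int n / real NN"
  have tN: "t * real NN = 2 * pi * of_int n" unfolding t_def by (simp add: NN_def)
  have nz: "sin (t / 2) \<noteq> 0" unfolding t_def by (rule half_nz[OF False assms])
  define f where "f m = cos (t * real m - t / 2)" for m
  have fs: "f m - f (Suc m) = 2 * sin (t / 2) * sin (t * real m)" for m
  proof -
    have "t * real (Suc m) - t / 2 = t * real m + t / 2" by (simp add: algebra_simps)
    thus ?thesis unfolding f_def using tele_cos[of t m] by (simp add: add.commute)
  qed
  have "2 * sin (t / 2) * (\<Sum>m<NN. sin (omi n * (xm m - a))) = (\<Sum>m<NN. f m - f (Suc m))"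
    unfolding fs sum_distrib_left omi_xm t_def by simp
  also have "\<dots> = - (\<Sum>m<NN. f (Suc m) - f m)" by (simp add: sum_negf[symmetric])
  also have "\<dots> = - (f NN - f 0)" by (subst sum_lessThan_telescope) simp
  also have "\<dots> = 0" unfolding f_def tN
    by (simp add: cos_diff)
  finally show ?thesis using nz by simp
qed

lemma prodCC: "Cf j x * Cf l x = (cos (omi (int j - int l) * (x - a)) + cos (omi (int j + int l) * (x - a))) / 2"
  unfolding Cf_alt om_omi cos_times_cos by (auto simp: omi_def algebra_simps add_divide_distrib diff_divide_distrib)
lemma prodSS: "Sf j x * Sf l x = (cos (omi (int j - int l) * (x - a)) - cos (omi (int j + int l) * (x - a))) / 2"
  unfolding Sf_alt om_omi sin_times_sin by (auto simp: omi_def algebra_simps add_divide_distrib diff_divide_distrib)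
lemma prodSC: "Sf j x * Cf l x = (sin (omi (int j + int l) * (x - a)) + sin (omi (int j - int l) * (x - a))) / 2"
  unfolding Sf_alt Cf_alt om_omi sin_times_cos by (auto simp: omi_def algebra_simps add_divide_distrib diff_divide_distrib)

lemma dCC:
  assumes "j \<le> k" "l \<le> k"
  shows "(\<Sum>m<NN. Cf j (xm m) * Cf l (xm m)) = (if j = l then (if j = 0 then real NN else real NN / 2) else 0)"
proof -
  have "(\<Sum>m<NN. Cf j (xm m) * Cf l (xm m)) = ((\<Sum>m<NN. cos (omi (int j - int l) * (xm m - a))) + (\<Sum>m<NN. cos (omi (int j + int l) * (xm m - a)))) / 2"
    unfolding prodCC by (simp add: sum_divide_distrib[symmetric] sum.distrib)
  also have "\<dots> = (if j = l then (if j = 0 then real NN else real NN / 2) else 0)"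
    using assms by (subst dcos, simp add: NN_def)+ auto
  finally show ?thesis .
qed

lemma dSS:
  assumes "j \<le> k" "l \<le> k"
  shows "(\<Sum>m<NN. Sf j (xm m) * Sf l (xm m)) = (if j = l \<and> j \<noteq> 0 then real NN / 2 else 0)"
proof -
  have "(\<Sum>m<NN. Sf j (xm m) * Sf l (xm m)) = ((\<Sum>m<NN. cos (omi (int j - int l) * (xm m - a))) - (\<Sum>m<NN. cos (omi (int j + int l) * (xm m - a)))) / 2"
    unfolding prodSS by (simp add: sum_divide_distrib[symmetric] sum_subtractf)
  also have "\<dots> = (if j = l \<and> j \<noteq> 0 then real NN / 2 else 0)"
    using assms by (subst dcos, simp add: NN_def)+ auto
  finally show ?thesis .
qed

lemma dSC:
  assumes "j \<le> k" "l \<le> k"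
  shows "(\<Sum>m<NN. Sf j (xm m) * Cf l (xm m)) = 0"
proof -
  have "(\<Sum>m<NN. Sf j (xm m) * Cf l (xm m)) = ((\<Sum>m<NN. sin (omi (int j + int l) * (xm m - a))) + (\<Sum>m<NN. sin (omi (int j - int l) * (xm m - a)))) / 2"
    unfolding prodSC by (simp add: sum_divide_distrib[symmetric] sum.distrib)
  also have "\<dots> = 0"
    using assms by (subst dsin, simp add: NN_def)+ auto
  finally show ?thesis .
qed

lemma dsum_tp: "(\<Sum>m<NN. tp c s (xm m) * g m) =
   (\<Sum>j\<le>k. c j * (\<Sum>m<NN. Cf j (xm m) * g m) + s j * (\<Sum>m<NN. Sf j (xm m) * g m))"
proof -
  have "(\<Sum>m<NN. tp c s (xm m) * g m) = (\<Sum>m<NN. \<Sum>j\<le>k. c j * (Cf j (xm m) * g m) + s j * (Sf j (xm m) * g m))"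
    unfolding tp_def sum_distrib_right by (simp add: algebra_simps)
  also have "\<dots> = (\<Sum>j\<le>k. \<Sum>m<NN. c j * (Cf j (xm m) * g m) + s j * (Sf j (xm m) * g m))"
    by (rule sum.swap)
  also have "\<dots> = (\<Sum>j\<le>k. c j * (\<Sum>m<NN. Cf j (xm m) * g m) + s j * (\<Sum>m<NN. Sf j (xm m) * g m))"
    by (simp add: sum.distrib sum_distrib_left)
  finally show ?thesis .
qed

definition dc :: "(real \<Rightarrow> real) \<Rightarrow> nat \<Rightarrow> real" where
  "dc f l = (if l = 0 then 1 else 2) / real NN * (\<Sum>m<NN. f (xm m) * Cf l (xm m))"
definition ds :: "(real \<Rightarrow> real) \<Rightarrow> nat \<Rightarrow> real" where
  "ds f l = 2 / real NN * (\<Sum>m<NN. f (xm m) * Sf l (xm m))"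

lemma dc_tp: assumes "l \<le> k" shows "dc (tp c s) l = c l"
proof -
  have "(\<Sum>m<NN. tp c s (xm m) * Cf l (xm m)) = (\<Sum>j\<le>k. if j = l then c j * (if j = 0 then real NN else real NN / 2) else 0)"
    unfolding dsum_tp using assms by (intro sum.cong refl) (auto simp: dCC dSC)
  also have "\<dots> = c l * (if l = 0 then real NN else real NN / 2)" using assms by simp
  finally have e: "(\<Sum>m<NN. tp c s (xm m) * Cf l (xm m)) = c l * (if l = 0 then real NN else real NN / 2)" .
  have "real NN > 0" by (simp add: NN_def)
  thus ?thesis unfolding dc_def e by simp
qed

lemma ds_tp: assumes "l \<le> k" "l \<noteq> 0" shows "ds (tp c s) l = s l"
proof -
  have "(\<Sum>m<NN. tp c s (xm m) * Sf l (xm m)) = (\<Sum>j\<le>k. if j = l then s j * (real NN / 2) else 0)"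
    unfolding dsum_tp using assms by (intro sum.cong refl) (auto simp: dSS dSC mult.commute[of "Cf _ _"])
  also have "\<dots> = s l * (real NN / 2)" using assms by simp
  finally have e: "(\<Sum>m<NN. tp c s (xm m) * Sf l (xm m)) = s l * (real NN / 2)" .
  have "real NN > 0" by (simp add: NN_def)
  thus ?thesis unfolding ds_def e by simp
qed

lemma tp_samp: assumes "f = tp c s" shows "f = tp (dc f) (ds f)"
proof
  fix x
  have "tp c s x = tp (dc (tp c s)) (ds (tp c s)) x" unfolding tp_def[of c s x] tp_def[of "dc (tp c s)" "ds (tp c s)" x]
  proof (intro sum.cong refl)
    fix j assume "j \<in> {..k}"
    thus "c j * Cf j x + s j * Sf j x = dc (tp c s) j * Cf j x + ds (tp c s) j * Sf j x"
      by (cases "j = 0") (auto simp: dc_tp ds_tp)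
  qed
  thus "f x = tp (dc f) (ds f) x" using assms by simp
qed

end

context bbm begin

abbreviation T where "T f \<equiv> trig_poly a b k f"

lemma T_tp[simp]: "T (tp c s)" unfolding trig_poly_iff by blast

lemma tp_per: "tp c s b = tp c s a"
proof -
  have "Cf j b = Cf j a" "Sf j b = Sf j a" for j
    unfolding Cf_alt Sf_alt om_omi using omi_L[of "int j"] cos_int_2pin[of "int j"] sin_int_2pin[of "int j"] by simp_all
  thus ?thesis unfolding tp_def by simp
qed

lemma T_per: "T f \<Longrightarrow> f b = f a"
  unfolding trig_poly_iff using tp_per by auto

lemma T_deriv: "T f \<Longrightarrow> T (deriv f)"
  unfolding trig_poly_iff using tp_deriv_eq by auto

lemma T_has_deriv: "T f \<Longrightarrow> (f has_real_derivative deriv f x) (at x)"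
  unfolding trig_poly_iff using tp_deriv tp_deriv_eq by auto

lemma T_cont: "T f \<Longrightarrow> continuous_on S f"
  unfolding trig_poly_iff using tp_cont by auto

lemma T_int: "T f \<Longrightarrow> f integrable_on {a..b}"
  using T_cont integrable_continuous_interval by blast

lemma tp_diff: "tp c s x - tp c' s' x = tp (\<lambda>j. c j - c' j) (\<lambda>j. s j - s' j) x"
  unfolding tp_def by (simp add: sum_subtractf[symmetric] algebra_simps)

lemma T_diff: "T f \<Longrightarrow> T g \<Longrightarrow> T (\<lambda>x. f x - g x)"
  unfolding trig_poly_iff using tp_diff by fastforce

lemma tp_neg: "- tp c s x = tp (\<lambda>j. - c j) (\<lambda>j. - s j) x"
  unfolding tp_def by (simp add: sum_negf[symmetric] algebra_simps)

lemma T_neg: "T f \<Longrightarrow> T (\<lambda>x. - f x)"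
  unfolding trig_poly_iff using tp_neg by fastforce

lemma int_deriv0: "T f \<Longrightarrow> integral {a..b} (deriv f) = 0"
  by (rule ftc_per[of f]) (auto intro: T_has_deriv T_per)

lemma ibp:
  assumes f: "T f" and g: "T g"
  shows "integral {a..b} (\<lambda>x. deriv f x * g x) = - integral {a..b} (\<lambda>x. f x * deriv g x)"
proof -
  have "integral {a..b} (\<lambda>x. deriv f x * g x + f x * deriv g x) = 0"
    by (rule ftc_per[of "\<lambda>x. f x * g x"])
       (auto intro!: derivative_eq_intros T_has_deriv f g simp: T_per[OF f] T_per[OF g])
  moreover have "integral {a..b} (\<lambda>x. deriv f x * g x + f x * deriv g x) =
     integral {a..b} (\<lambda>x. deriv f x * g x) + integral {a..b} (\<lambda>x. f x * deriv g x)"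
    by (intro integral_add integrable_continuous_interval continuous_intros T_cont T_deriv f g)
  ultimately show ?thesis by simp
qed

lemma tp_zero':
  assumes "T d" "integral {a..b} (\<lambda>x. d x * d x) = 0"
  shows "d x = 0"
  using assms tp_zero unfolding trig_poly_iff by blast

end

context bbm begin

lemma proj_unique_ex:
  assumes f: "continuous_on {a..b} f"
  shows "\<exists>!p. T p \<and> (\<forall>q. T q \<longrightarrow> integral {a..b} (\<lambda>x. (f x - p x) * q x) = 0)"
proof (rule ex_ex1I)
  define pc where "pc l = (if l = 0 then 1 / (b - a) else 2 / (b - a)) * integral {a..b} (\<lambda>x. f x * Cf l x)" for l
  define ps where "ps l = 2 / (b - a) * integral {a..b} (\<lambda>x. f x * Sf l x)" for l
  define p where "p = tp pc ps"
  have cp: "continuous_on {a..b} p" unfolding p_def by (rule tp_cont)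
  have fp: "continuous_on {a..b} (\<lambda>x. f x - p x)" by (intro continuous_on_diff f cp)
  have pprop: "integral {a..b} (\<lambda>x. (f x - p x) * q x) = 0" if "T q" for q
  proof -
    obtain c s where q: "q = tp c s" using \<open>T q\<close> unfolding trig_poly_iff by blast
    have c0: "integral {a..b} (\<lambda>x. (f x - p x) * Cf j x) = 0" if "j \<le> k" for j
    proof -
      have "integral {a..b} (\<lambda>x. (f x - p x) * Cf j x) = integral {a..b} (\<lambda>x. f x * Cf j x - p x * Cf j x)"
        by (simp add: left_diff_distrib)
      also have "\<dots> = integral {a..b} (\<lambda>x. f x * Cf j x) - integral {a..b} (\<lambda>x. p x * Cf j x)"
        by (intro integral_diff integrable_continuous_interval continuous_on_mult f cp Cf_cont)
      also have "\<dots> = 0" unfolding p_def IPc[OF that] pc_def using ab by auto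
      finally show ?thesis .
    qed
    have s0: "integral {a..b} (\<lambda>x. (f x - p x) * Sf j x) = 0" if "j \<le> k" for j
    proof (cases "j = 0")
      case True thus ?thesis by simp
    next
      case False
      have "integral {a..b} (\<lambda>x. (f x - p x) * Sf j x) = integral {a..b} (\<lambda>x. f x * Sf j x - p x * Sf j x)"
        by (simp add: left_diff_distrib)
      also have "\<dots> = integral {a..b} (\<lambda>x. f x * Sf j x) - integral {a..b} (\<lambda>x. p x * Sf j x)"
        by (intro integral_diff integrable_continuous_interval continuous_on_mult f cp Sf_cont)
      also have "\<dots> = 0" unfolding p_def IPs[OF that] ps_def using ab False by auto
      finally show ?thesis .
    qed
    show ?thesis unfolding q int_mult_tp[OF fp] by (intro sum.neutral) (simp add: c0 s0)
  qed
  show "\<exists>p. T p \<and> (\<forall>q. T q \<longrightarrow> integral {a..b} (\<lambda>x. (f x - p x) * q x) = 0)"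
    using pprop T_tp[of pc ps] unfolding p_def by blast
next
  fix p1 p2
  assume 1: "T p1 \<and> (\<forall>q. T q \<longrightarrow> integral {a..b} (\<lambda>x. (f x - p1 x) * q x) = 0)"
     and 2: "T p2 \<and> (\<forall>q. T q \<longrightarrow> integral {a..b} (\<lambda>x. (f x - p2 x) * q x) = 0)"
  define d where "d x = p1 x - p2 x" for x
  have Td: "T d" unfolding d_def[abs_def] using 1 2 by (intro T_diff) auto
  have cp1: "continuous_on {a..b} p1" using 1 T_cont by blast
  have cp2: "continuous_on {a..b} p2" using 2 T_cont by blast
  have cd: "continuous_on {a..b} d" using Td T_cont by blast
  have i1: "integral {a..b} (\<lambda>x. (f x - p1 x) * d x) = 0" using 1 Td by blast
  have i2: "integral {a..b} (\<lambda>x. (f x - p2 x) * d x) = 0" using 2 Td by blast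
  have "integral {a..b} (\<lambda>x. (f x - p2 x) * d x) - integral {a..b} (\<lambda>x. (f x - p1 x) * d x)
      = integral {a..b} (\<lambda>x. (f x - p2 x) * d x - (f x - p1 x) * d x)"
    by (intro integral_diff[symmetric] integrable_continuous_interval continuous_on_mult continuous_on_diff f cp1 cp2 cd)
  also have "\<dots> = integral {a..b} (\<lambda>x. d x * d x)"
    by (rule arg_cong[where f="integral _"]) (auto simp: d_def algebra_simps)
  finally have "integral {a..b} (\<lambda>x. d x * d x) = 0" using i1 i2 by simp
  hence "d x = 0" for x by (rule tp_zero'[OF Td])
  thus "p1 = p2" unfolding d_def by auto
qed

lemma proj_prop:
  assumes f: "continuous_on {a..b} f"
  shows "T (l2_proj a b k f)" "\<And>q. T q \<Longrightarrow> integral {a..b} (\<lambda>x. (f x - l2_proj a b k f x) * q x) = 0"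
  using theI'[OF proj_unique_ex[OF f]] unfolding l2_proj_def by auto

end

context bbm begin
lemma tp_dd: "deriv (deriv (tp c s)) = tp (\<lambda>j. - (om j * om j) * c j) (\<lambda>j. - (om j * om j) * s j)"
  unfolding tp_deriv_eq by (simp add: algebra_simps)

lemma helm_unique_ex:
  assumes g: "T g"
  shows "\<exists>!v. T v \<and> (\<forall>x. v x - deriv (deriv v) x = g x)"
proof (rule ex_ex1I)
  obtain c s where gcs: "g = tp c s" using g unfolding trig_poly_iff by blast
  define v where "v = tp (\<lambda>j. c j / (1 + om j * om j)) (\<lambda>j. s j / (1 + om j * om j))"
  have pos: "1 + om j * om j \<noteq> 0" for j by (metis add_pos_nonneg less_irrefl zero_le_square zero_less_one)
  have co: "y / (1 + om j * om j) - - (om j * om j) * (y / (1 + om j * om j)) = y" for y j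
  proof -
    have "y / (1 + om j * om j) - - (om j * om j) * (y / (1 + om j * om j)) = (1 + om j * om j) * (y / (1 + om j * om j))"
      by (simp add: algebra_simps add_divide_distrib)
    also have "\<dots> = y" using pos[of j] by simp
    finally show ?thesis .
  qed
  have co2: "y / (1 + om j * om j) + om j * om j * y / (1 + om j * om j) = y" for y j
  proof -
    have "y / (1 + om j * om j) + om j * om j * y / (1 + om j * om j) = (1 + om j * om j) * y / (1 + om j * om j)"
      by (simp add: add_divide_distrib algebra_simps)
    also have "\<dots> = y" using pos[of j] by simp
    finally show ?thesis .
  qed
  have vv: "v x - deriv (deriv v) x = g x" for x
    unfolding v_def tp_dd tp_diff gcs
    by (rule arg_cong2[where f="\<lambda>c s. tp c s x"]; rule ext) (simp_all add: co co2)
  show "\<exists>v. T v \<and> (\<forall>x. v x - deriv (deriv v) x = g x)"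
    using vv T_tp unfolding v_def by blast
next
  fix v1 v2
  assume 1: "T v1 \<and> (\<forall>x. v1 x - deriv (deriv v1) x = g x)"
     and 2: "T v2 \<and> (\<forall>x. v2 x - deriv (deriv v2) x = g x)"
  obtain c1 s1 where v1: "v1 = tp c1 s1" using 1 unfolding trig_poly_iff by blast
  obtain c2 s2 where v2: "v2 = tp c2 s2" using 2 unfolding trig_poly_iff by blast
  define d where "d = tp (\<lambda>j. c1 j - c2 j) (\<lambda>j. s1 j - s2 j)"
  have Td: "T d" unfolding d_def by simp
  have dd: "deriv (deriv d) x = deriv (deriv v1) x - deriv (deriv v2) x" for x
    unfolding d_def v1 v2 tp_dd tp_diff by (simp add: algebra_simps)
  have dx: "d x = v1 x - v2 x" for x unfolding d_def v1 v2 tp_diff ..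
  have e1: "d x = deriv (deriv d) x" for x
  proof -
    have "v1 x - deriv (deriv v1) x = g x" "v2 x - deriv (deriv v2) x = g x" using 1 2 by auto
    thus ?thesis unfolding dd dx by linarith
  qed
  have "(\<lambda>x. d x * d x) = (\<lambda>x. deriv (deriv d) x * d x)"
    by (rule ext) (metis e1)
  hence "integral {a..b} (\<lambda>x. d x * d x) = integral {a..b} (\<lambda>x. deriv (deriv d) x * d x)"
    by simp
  also have "\<dots> = - integral {a..b} (\<lambda>x. deriv d x * deriv d x)"
    by (rule ibp) (auto intro: T_deriv Td)
  finally have e: "integral {a..b} (\<lambda>x. d x * d x) + integral {a..b} (\<lambda>x. deriv d x * deriv d x) = 0" by simp
  have n1: "integral {a..b} (\<lambda>x. d x * d x) \<ge> 0"
    by (intro integral_nonneg integrable_continuous_interval continuous_intros T_cont Td) auto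
  have n2: "integral {a..b} (\<lambda>x. deriv d x * deriv d x) \<ge> 0"
    by (intro integral_nonneg integrable_continuous_interval continuous_intros T_cont T_deriv Td) auto
  have "integral {a..b} (\<lambda>x. d x * d x) = 0" using e n1 n2 by linarith
  hence "d x = 0" for x by (rule tp_zero'[OF Td])
  thus "v1 = v2" using dx by (auto simp: fun_eq_iff)
qed

lemma helm_prop:
  assumes g: "T g"
  shows "T (helm_inv a b k g)" "\<And>x. helm_inv a b k g x - deriv (deriv (helm_inv a b k g)) x = g x"
  using theI'[OF helm_unique_ex[OF g]] unfolding helm_inv_def by auto

end

context bbm begin

lemma cmul: "T f \<Longrightarrow> T g \<Longrightarrow> (\<lambda>x. f x * g x) integrable_on {a..b}"
  by (intro integrable_continuous_interval continuous_on_mult T_cont)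

lemma deriv_neg: "T f \<Longrightarrow> deriv (\<lambda>x. - f x) = (\<lambda>x. - deriv f x)"
  by (rule ext, rule DERIV_imp_deriv, rule DERIV_minus, rule T_has_deriv)

lemma spatial:
  assumes U: "T U"
  defines "W \<equiv> l2_proj a b k (\<lambda>y. (U y)^2 / 2)"
  defines "V \<equiv> helm_inv a b k (deriv W)"
  defines "R \<equiv> (\<lambda>x. - V x)"
  shows "T R"
    and "integral {a..b} R = 0"
    and "integral {a..b} (\<lambda>x. U x * R x + deriv U x * deriv R x) = 0"
    and "integral {a..b} (\<lambda>x. (U x)^2 / 2 * R x) = 0"
proof -
  have cf: "continuous_on {a..b} (\<lambda>y. (U y)^2 / 2)"
    by (intro continuous_intros T_cont U) auto
  have TW: "T W" and Wp: "\<And>q. T q \<Longrightarrow> integral {a..b} (\<lambda>x. ((U x)^2 / 2 - W x) * q x) = 0"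
    using proj_prop[OF cf] unfolding W_def by auto
  have TG: "T (deriv W)" using TW by (rule T_deriv)
  have TV: "T V" and Vp: "\<And>x. V x - deriv (deriv V) x = deriv W x"
    using helm_prop[OF TG] unfolding V_def by auto
  have TV': "T (deriv V)" and TV'': "T (deriv (deriv V))" using TV by (auto intro: T_deriv)
  show TR: "T R" unfolding R_def by (rule T_neg[OF TV])
  have TU': "T (deriv U)" using U by (rule T_deriv)
  have R': "deriv R = (\<lambda>x. - deriv V x)" unfolding R_def by (rule deriv_neg[OF TV])
  have R'': "deriv (deriv R) = (\<lambda>x. - deriv (deriv V) x)" unfolding R' by (rule deriv_neg[OF TV'])
  have TR': "T (deriv R)" using TR by (rule T_deriv)
  have "integral {a..b} V = integral {a..b} (\<lambda>x. deriv (deriv V) x + deriv W x)"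
    using Vp by (metis diff_eq_eq add.commute)
  also have "\<dots> = integral {a..b} (deriv (deriv V)) + integral {a..b} (deriv W)"
    by (intro integral_add T_int TV'' TG)
  also have "\<dots> = 0" using int_deriv0[OF TV'] int_deriv0[OF TW] by simp
  finally have "integral {a..b} V = 0" .
  thus "integral {a..b} R = 0" unfolding R_def by simp
  have A1: "integral {a..b} (\<lambda>x. U x * R x + deriv U x * deriv R x) =
      integral {a..b} (\<lambda>x. U x * R x) + integral {a..b} (\<lambda>x. deriv U x * deriv R x)"
    by (intro integral_add cmul U TR TU' TR')
  have A2: "integral {a..b} (\<lambda>x. deriv U x * deriv R x) = - integral {a..b} (\<lambda>x. U x * deriv (deriv R) x)"
    by (rule ibp[OF U TR'])
  have A3: "integral {a..b} (\<lambda>x. U x * R x) - integral {a..b} (\<lambda>x. U x * deriv (deriv R) x)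
      = - integral {a..b} (\<lambda>x. deriv W x * U x)"
  proof -
    have "integral {a..b} (\<lambda>x. U x * R x) - integral {a..b} (\<lambda>x. U x * deriv (deriv R) x)
       = integral {a..b} (\<lambda>x. U x * R x - U x * deriv (deriv R) x)"
      by (intro integral_diff[symmetric] cmul U TR T_deriv TR')
    also have "\<dots> = integral {a..b} (\<lambda>x. - (deriv W x * U x))"
    proof (rule arg_cong[where f="integral _"], rule ext)
      fix x
      have r1: "deriv (deriv R) x = - deriv (deriv V) x" using R'' by simp
      have r2: "R x = - V x" by (simp add: R_def)
      have "R x - deriv (deriv R) x = - deriv W x" unfolding r1 r2 using Vp[of x] by simp
      thus "U x * R x - U x * deriv (deriv R) x = - (deriv W x * U x)"
        by (metis right_diff_distrib mult.commute mult_minus_left)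
    qed
    also have "\<dots> = - integral {a..b} (\<lambda>x. deriv W x * U x)"
      by (rule integral_neg)
    finally show ?thesis .
  qed
  have A4: "integral {a..b} (\<lambda>x. deriv W x * U x) = - integral {a..b} (\<lambda>x. W x * deriv U x)"
    by (rule ibp[OF TW U])
  have A5: "integral {a..b} (\<lambda>x. W x * deriv U x) = integral {a..b} (\<lambda>x. (U x)^2 / 2 * deriv U x)"
  proof -
    have "0 = integral {a..b} (\<lambda>x. ((U x)^2 / 2 - W x) * deriv U x)" using Wp[OF TU'] by simp
    also have "\<dots> = integral {a..b} (\<lambda>x. (U x)^2 / 2 * deriv U x - W x * deriv U x)"
      by (simp add: left_diff_distrib)
    also have "\<dots> = integral {a..b} (\<lambda>x. (U x)^2 / 2 * deriv U x) - integral {a..b} (\<lambda>x. W x * deriv U x)"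
      by (intro integral_diff integrable_continuous_interval continuous_intros T_cont U TU' TW) auto
    finally show ?thesis by simp
  qed
  have A6: "integral {a..b} (\<lambda>x. (U x)^2 / 2 * deriv U x) = 0"
  proof (rule ftc_per[of "\<lambda>x. (U x)^3 / 6"])
    fix x
    show "((\<lambda>x. (U x)^3 / 6) has_real_derivative (U x)^2 / 2 * deriv U x) (at x)"
      using T_has_deriv[OF U, of x]
      by (auto intro!: derivative_eq_intros simp: power2_eq_square)
  next
    show "(U b)^3 / 6 = (U a)^3 / 6" using T_per[OF U] by simp
  qed
  show "integral {a..b} (\<lambda>x. U x * R x + deriv U x * deriv R x) = 0"
    using A1 A2 A3 A4 A5 A6 by linarith
  define Z where "Z = helm_inv a b k W"
  have TZ: "T Z" and Zp: "\<And>x. Z x - deriv (deriv Z) x = W x"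
    using helm_prop[OF TW] unfolding Z_def by auto
  have TZ': "T (deriv Z)" and TZ'': "T (deriv (deriv Z))" and TZ''': "T (deriv (deriv (deriv Z)))"
    using TZ by (auto intro: T_deriv)
  have Wfun: "W = (\<lambda>x. Z x - deriv (deriv Z) x)" using Zp by auto
  have dW: "deriv W x = deriv Z x - deriv (deriv (deriv Z)) x" for x
    unfolding Wfun
    by (rule DERIV_imp_deriv, rule DERIV_diff; rule T_has_deriv) (use TZ TZ'' in auto)
  have VZ: "V = deriv Z"
  proof -
    have "T (deriv Z) \<and> (\<forall>x. deriv Z x - deriv (deriv (deriv Z)) x = deriv W x)" using TZ' dW by simp
    moreover have "T V \<and> (\<forall>x. V x - deriv (deriv V) x = deriv W x)" using TV Vp by simp
    ultimately show ?thesis using helm_unique_ex[OF TG] by blast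
  qed
  have E1: "integral {a..b} (\<lambda>x. (U x)^2 / 2 * R x) = integral {a..b} (\<lambda>x. W x * R x)"
  proof -
    have "0 = integral {a..b} (\<lambda>x. ((U x)^2 / 2 - W x) * R x)" using Wp[OF TR] by simp
    also have "\<dots> = integral {a..b} (\<lambda>x. (U x)^2 / 2 * R x - W x * R x)"
      by (simp add: left_diff_distrib)
    also have "\<dots> = integral {a..b} (\<lambda>x. (U x)^2 / 2 * R x) - integral {a..b} (\<lambda>x. W x * R x)"
      by (intro integral_diff integrable_continuous_interval continuous_intros T_cont U TR TW) auto
    finally show ?thesis by simp
  qed
  have E2: "integral {a..b} (\<lambda>x. W x * R x) = - (integral {a..b} (\<lambda>x. Z x * deriv Z x) - integral {a..b} (\<lambda>x. deriv (deriv Z) x * deriv Z x))"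
  proof -
    have "integral {a..b} (\<lambda>x. W x * R x) = integral {a..b} (\<lambda>x. - (Z x * deriv Z x - deriv (deriv Z) x * deriv Z x))"
      unfolding R_def VZ using Zp by (intro arg_cong[where f="integral _"] ext) (metis left_diff_distrib mult_minus_right)
    also have "\<dots> = - integral {a..b} (\<lambda>x. Z x * deriv Z x - deriv (deriv Z) x * deriv Z x)"
      by (rule integral_neg)
    also have "\<dots> = - (integral {a..b} (\<lambda>x. Z x * deriv Z x) - integral {a..b} (\<lambda>x. deriv (deriv Z) x * deriv Z x))"
      by (subst integral_diff) (auto intro: cmul TZ TZ' TZ'')
    finally show ?thesis .
  qed
  have E3: "integral {a..b} (\<lambda>x. Z x * deriv Z x) = 0"
  proof (rule ftc_per[of "\<lambda>x. (Z x)^2 / 2"])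
    fix x
    show "((\<lambda>x. (Z x)^2 / 2) has_real_derivative Z x * deriv Z x) (at x)"
      using T_has_deriv[OF TZ, of x] by (auto intro!: derivative_eq_intros)
  next
    show "(Z b)^2 / 2 = (Z a)^2 / 2" using T_per[OF TZ] by simp
  qed
  have E4: "integral {a..b} (\<lambda>x. deriv (deriv Z) x * deriv Z x) = 0"
  proof (rule ftc_per[of "\<lambda>x. (deriv Z x)^2 / 2"])
    fix x
    show "((\<lambda>x. (deriv Z x)^2 / 2) has_real_derivative deriv (deriv Z) x * deriv Z x) (at x)"
      using T_has_deriv[OF TZ', of x] by (auto intro!: derivative_eq_intros simp: mult.commute)
  next
    show "(deriv Z b)^2 / 2 = (deriv Z a)^2 / 2" using T_per[OF TZ'] by simp
  qed
  show "integral {a..b} (\<lambda>x. (U x)^2 / 2 * R x) = 0" using E1 E2 E3 E4 by simp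
qed

end

context bbm begin

lemma tp_tderiv:
  assumes "\<And>j. ((\<lambda>s. c s j) has_real_derivative c' j) (at t within I)"
      and "\<And>j. ((\<lambda>s. d s j) has_real_derivative d' j) (at t within I)"
  shows "((\<lambda>s. tp (c s) (d s) x) has_real_derivative tp c' d' x) (at t within I)"
  unfolding tp_def by (intro DERIV_sum DERIV_add DERIV_cmult_right assms)

lemma jcont:
  assumes c: "\<And>j. continuous_on I (\<lambda>t. c t j)" and d: "\<And>j. continuous_on I (\<lambda>t. d t j)"
  shows "continuous_on (I \<times> S) (\<lambda>p. tp (c (fst p)) (d (fst p)) (snd p))"
proof -
  have c1: "continuous_on (I \<times> S) (\<lambda>p. c (fst p) j)" for j
    by (rule continuous_on_compose2[OF c continuous_on_fst]) auto
  have d1: "continuous_on (I \<times> S) (\<lambda>p. d (fst p) j)" for j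
    by (rule continuous_on_compose2[OF d continuous_on_fst]) auto
  have e1: "continuous_on (I \<times> S) (\<lambda>p. Cf j (snd p))" for j
    by (rule continuous_on_compose2[OF Cf_cont[of UNIV] continuous_on_snd]) auto
  have e2: "continuous_on (I \<times> S) (\<lambda>p. Sf j (snd p))" for j
    by (rule continuous_on_compose2[OF Sf_cont[of UNIV] continuous_on_snd]) auto
  show ?thesis unfolding tp_def
    by (intro continuous_on_sum continuous_on_add continuous_on_mult c1 d1 e1 e2)
qed

lemma lr:
  assumes "convex I" "t \<in> I"
   and "\<And>t x. t \<in> I \<Longrightarrow> ((\<lambda>s. f s x) has_real_derivative fx t x) (at t within I)"
   and "\<And>t. t \<in> I \<Longrightarrow> continuous_on {a..b} (f t)"
   and "continuous_on (I \<times> {a..b}) (\<lambda>p. fx (fst p) (snd p))"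
  shows "((\<lambda>t. integral {a..b} (f t)) has_real_derivative integral {a..b} (fx t)) (at t within I)"
proof -
  have e: "(\<lambda>(x, t). fx x t) = (\<lambda>p. fx (fst p) (snd p))" by auto
  show ?thesis
    using leibniz_rule_field_derivative[where f=f and fx=fx and U=I and a=a and b=b] assms integrable_continuous_interval
    unfolding cbox_interval e by (meson integrable_continuous_interval)
qed

end

context bbm begin

lemma main:
  assumes I_open: "open I" and I_interval: "is_interval I"
    and u_Tk: "\<And>t. t \<in> I \<Longrightarrow> trig_poly a b k (u t)"
    and u_ode: "\<And>t x. t \<in> I \<Longrightarrow>
                  ((\<lambda>s. u s x) has_real_derivative bbm_rhs a b k (u t) x) (at t)"
    and u_C1: "\<And>x. continuous_on I (\<lambda>t. bbm_rhs a b k (u t) x)"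
  shows "\<forall>t1\<in>I. \<forall>t2\<in>I.
           bbm_mass a b (u t1) = bbm_mass a b (u t2) \<and>
           bbm_momentum a b (u t1) = bbm_momentum a b (u t2) \<and>
           bbm_energy a b (u t1) = bbm_energy a b (u t2)"
proof -
  have cvx: "convex I" using I_interval by (rule is_interval_convex)
  define R where "R t = bbm_rhs a b k (u t)" for t
  have Rsp: "T (R t)"
     "integral {a..b} (R t) = 0"
     "integral {a..b} (\<lambda>x. u t x * R t x + deriv (u t) x * deriv (R t) x) = 0"
     "integral {a..b} (\<lambda>x. (u t x)^2 / 2 * R t x) = 0" if "t \<in> I" for t
    using spatial[OF u_Tk[OF that]] unfolding R_def bbm_rhs_def by auto
  define A where "A t j = dc (u t) j" for t j
  define B where "B t j = ds (u t) j" for t j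
  define A' where "A' t j = dc (R t) j" for t j
  define B' where "B' t j = ds (R t) j" for t j
  have dA: "((\<lambda>s. A s j) has_real_derivative A' t j) (at t within I)"
       and dB: "((\<lambda>s. B s j) has_real_derivative B' t j) (at t within I)" if "t \<in> I" for t j
  proof -
    have h: "((\<lambda>s. u s x) has_real_derivative R t x) (at t within I)" for x
      unfolding R_def by (rule has_field_derivative_at_within, rule u_ode[OF that])
    show "((\<lambda>s. A s j) has_real_derivative A' t j) (at t within I)"
      unfolding A_def A'_def dc_def by (intro DERIV_cmult DERIV_sum DERIV_cmult_right h)
    show "((\<lambda>s. B s j) has_real_derivative B' t j) (at t within I)"
      unfolding B_def B'_def ds_def by (intro DERIV_cmult DERIV_sum DERIV_cmult_right h)
  qed
  have dA0: "((\<lambda>s. A s j) has_real_derivative A' t j) (at t)"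
       and dB0: "((\<lambda>s. B s j) has_real_derivative B' t j) (at t)" if "t \<in> I" for t j
  proof -
    have e: "at t within I = at t" by (rule at_within_open[OF that I_open])
    show "((\<lambda>s. A s j) has_real_derivative A' t j) (at t)" using dA[OF that, of j] unfolding e .
    show "((\<lambda>s. B s j) has_real_derivative B' t j) (at t)" using dB[OF that, of j] unfolding e .
  qed
  have cA: "continuous_on I (\<lambda>t. A t j)" and cB: "continuous_on I (\<lambda>t. B t j)" for j
    using dA0 dB0 by (auto intro!: continuous_at_imp_continuous_on DERIV_isCont)
  have cA': "continuous_on I (\<lambda>t. A' t j)" and cB': "continuous_on I (\<lambda>t. B' t j)" for j
    unfolding A'_def B'_def dc_def ds_def R_def
    by (intro continuous_on_mult continuous_on_const continuous_on_sum u_C1)+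
  have uA: "u t = tp (A t) (B t)" if tI: "t \<in> I" for t
  proof -
    obtain c s where "u t = tp c s" using u_Tk[OF tI] unfolding trig_poly_iff by blast
    from tp_samp[OF this] show ?thesis unfolding A_def[abs_def] B_def[abs_def] by simp
  qed
  have rA: "R t = tp (A' t) (B' t)" if tI: "t \<in> I" for t
  proof -
    obtain c s where "R t = tp c s" using Rsp(1)[OF tI] unfolding trig_poly_iff by blast
    from tp_samp[OF this] show ?thesis unfolding A'_def[abs_def] B'_def[abs_def] by simp
  qed
  define DA where "DA t j = om j * B t j" for t j
  define DB where "DB t j = - om j * A t j" for t j
  define DA' where "DA' t j = om j * B' t j" for t j
  define DB' where "DB' t j = - om j * A' t j" for t j
  have duA: "deriv (u t) = tp (DA t) (DB t)" if "t \<in> I" for t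
    unfolding uA[OF that] tp_deriv_eq DA_def DB_def ..
  have drA: "deriv (R t) = tp (DA' t) (DB' t)" if "t \<in> I" for t
    unfolding rA[OF that] tp_deriv_eq DA'_def DB'_def ..
  have dDA: "((\<lambda>s. DA s j) has_real_derivative DA' t j) (at t within I)"
       and dDB: "((\<lambda>s. DB s j) has_real_derivative DB' t j) (at t within I)" if "t \<in> I" for t j
    unfolding DA_def DA'_def DB_def DB'_def by (intro DERIV_cmult dA dB that)+
  have cDA: "continuous_on I (\<lambda>t. DA t j)" and cDB: "continuous_on I (\<lambda>t. DB t j)"
   and cDA': "continuous_on I (\<lambda>t. DA' t j)" and cDB': "continuous_on I (\<lambda>t. DB' t j)" for j
    unfolding DA_def DB_def DA'_def DB'_def
    by (intro continuous_on_mult continuous_on_const cA cB cA' cB')+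
  have jU: "continuous_on (I \<times> {a..b}) (\<lambda>p. tp (A (fst p)) (B (fst p)) (snd p))"
    by (intro jcont cA cB)
  have jR: "continuous_on (I \<times> {a..b}) (\<lambda>p. tp (A' (fst p)) (B' (fst p)) (snd p))"
    by (intro jcont cA' cB')
  have jU': "continuous_on (I \<times> {a..b}) (\<lambda>p. tp (DA (fst p)) (DB (fst p)) (snd p))"
    by (intro jcont cDA cDB)
  have jR': "continuous_on (I \<times> {a..b}) (\<lambda>p. tp (DA' (fst p)) (DB' (fst p)) (snd p))"
    by (intro jcont cDA' cDB')
  have hU: "((\<lambda>s. tp (A s) (B s) x) has_real_derivative tp (A' t) (B' t) x) (at t within I)"
   and hU': "((\<lambda>s. tp (DA s) (DB s) x) has_real_derivative tp (DA' t) (DB' t) x) (at t within I)"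
    if "t \<in> I" for t x
    by (intro tp_tderiv dA dB dDA dDB that)+
  have mass: "\<exists>c. \<forall>t\<in>I. integral {a..b} (\<lambda>x. tp (A t) (B t) x) = c"
  proof (rule has_field_derivative_zero_constant[OF cvx])
    fix t assume t: "t \<in> I"
    have "((\<lambda>t. integral {a..b} (\<lambda>x. tp (A t) (B t) x)) has_real_derivative
          integral {a..b} (\<lambda>x. tp (A' t) (B' t) x)) (at t within I)"
      by (rule lr[OF cvx t]) (auto intro: hU tp_cont jU jR)
    moreover have "integral {a..b} (\<lambda>x. tp (A' t) (B' t) x) = 0"
      using Rsp(2)[OF t] unfolding rA[OF t] by simp
    ultimately show "((\<lambda>t. integral {a..b} (\<lambda>x. tp (A t) (B t) x)) has_real_derivative 0) (at t within I)"
      by simp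
  qed
  have mom: "\<exists>c. \<forall>t\<in>I. integral {a..b} (\<lambda>x. (tp (A t) (B t) x)^2 / 2 + (tp (DA t) (DB t) x)^2 / 2) = c"
  proof (rule has_field_derivative_zero_constant[OF cvx])
    fix t assume t: "t \<in> I"
    have "((\<lambda>t. integral {a..b} (\<lambda>x. (tp (A t) (B t) x)^2 / 2 + (tp (DA t) (DB t) x)^2 / 2)) has_real_derivative
          integral {a..b} (\<lambda>x. tp (A t) (B t) x * tp (A' t) (B' t) x + tp (DA t) (DB t) x * tp (DA' t) (DB' t) x)) (at t within I)"
    proof (rule lr[OF cvx t])
      fix t x assume t: "t \<in> I"
      show "((\<lambda>s. (tp (A s) (B s) x)^2 / 2 + (tp (DA s) (DB s) x)^2 / 2) has_real_derivative
          tp (A t) (B t) x * tp (A' t) (B' t) x + tp (DA t) (DB t) x * tp (DA' t) (DB' t) x) (at t within I)"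
        using hU[OF t, of x] hU'[OF t, of x]
        by (auto intro!: derivative_eq_intros simp: power2_eq_square)
    next
      fix t show "continuous_on {a..b} (\<lambda>x. (tp (A t) (B t) x)^2 / 2 + (tp (DA t) (DB t) x)^2 / 2)"
        by (intro continuous_intros tp_cont) auto
    next
      show "continuous_on (I \<times> {a..b}) (\<lambda>p. tp (A (fst p)) (B (fst p)) (snd p) * tp (A' (fst p)) (B' (fst p)) (snd p) +
            tp (DA (fst p)) (DB (fst p)) (snd p) * tp (DA' (fst p)) (DB' (fst p)) (snd p))"
        by (intro continuous_on_add continuous_on_mult jU jR jU' jR')
    qed
    moreover have "integral {a..b} (\<lambda>x. tp (A t) (B t) x * tp (A' t) (B' t) x + tp (DA t) (DB t) x * tp (DA' t) (DB' t) x) = 0"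
      using Rsp(3)[OF t] unfolding drA[OF t] duA[OF t] unfolding rA[OF t] uA[OF t] by simp
    ultimately show "((\<lambda>t. integral {a..b} (\<lambda>x. (tp (A t) (B t) x)^2 / 2 + (tp (DA t) (DB t) x)^2 / 2)) has_real_derivative 0) (at t within I)"
      by simp
  qed
  have en: "\<exists>c. \<forall>t\<in>I. integral {a..b} (\<lambda>x. (tp (A t) (B t) x)^3 / 6) = c"
  proof (rule has_field_derivative_zero_constant[OF cvx])
    fix t assume t: "t \<in> I"
    have "((\<lambda>t. integral {a..b} (\<lambda>x. (tp (A t) (B t) x)^3 / 6)) has_real_derivative
          integral {a..b} (\<lambda>x. (tp (A t) (B t) x)^2 / 2 * tp (A' t) (B' t) x)) (at t within I)"
    proof (rule lr[OF cvx t])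
      fix t x assume t: "t \<in> I"
      show "((\<lambda>s. (tp (A s) (B s) x)^3 / 6) has_real_derivative
          (tp (A t) (B t) x)^2 / 2 * tp (A' t) (B' t) x) (at t within I)"
        using hU[OF t, of x]
        by (auto intro!: derivative_eq_intros simp: power2_eq_square)
    next
      fix t show "continuous_on {a..b} (\<lambda>x. (tp (A t) (B t) x)^3 / 6)"
        by (intro continuous_intros tp_cont) auto
    next
      show "continuous_on (I \<times> {a..b}) (\<lambda>p. (tp (A (fst p)) (B (fst p)) (snd p))^2 / 2 * tp (A' (fst p)) (B' (fst p)) (snd p))"
        by (intro continuous_on_mult continuous_on_divide continuous_on_power continuous_on_const jU jR) auto
    qed
    moreover have "integral {a..b} (\<lambda>x. (tp (A t) (B t) x)^2 / 2 * tp (A' t) (B' t) x) = 0"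
      using Rsp(4)[OF t] unfolding rA[OF t] uA[OF t] by simp
    ultimately show "((\<lambda>t. integral {a..b} (\<lambda>x. (tp (A t) (B t) x)^3 / 6)) has_real_derivative 0) (at t within I)"
      by simp
  qed
  have M: "bbm_mass a b (u t) = integral {a..b} (\<lambda>x. tp (A t) (B t) x)" if "t \<in> I" for t
    unfolding bbm_mass_def uA[OF that] ..
  have P: "bbm_momentum a b (u t) = integral {a..b} (\<lambda>x. (tp (A t) (B t) x)^2 / 2 + (tp (DA t) (DB t) x)^2 / 2)" if "t \<in> I" for t
    unfolding bbm_momentum_def duA[OF that] unfolding uA[OF that] ..
  have E: "bbm_energy a b (u t) = integral {a..b} (\<lambda>x. (tp (A t) (B t) x)^3 / 6)" if "t \<in> I" for t
    unfolding bbm_energy_def uA[OF that] ..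
  then show ?thesis
  proof (intro ballI)
    fix t1 t2 assume t1: "t1 \<in> I" and t2: "t2 \<in> I"
    obtain c1 where c1: "\<forall>t\<in>I. integral {a..b} (\<lambda>x. tp (A t) (B t) x) = c1" using mass by blast
    obtain c2 where c2: "\<forall>t\<in>I. integral {a..b} (\<lambda>x. (tp (A t) (B t) x)^2 / 2 + (tp (DA t) (DB t) x)^2 / 2) = c2" using mom by blast
    obtain c3 where c3: "\<forall>t\<in>I. integral {a..b} (\<lambda>x. (tp (A t) (B t) x)^3 / 6) = c3" using en by blast
    show "bbm_mass a b (u t1) = bbm_mass a b (u t2) \<and>
           bbm_momentum a b (u t1) = bbm_momentum a b (u t2) \<and>
           bbm_energy a b (u t1) = bbm_energy a b (u t2)"
      unfolding M[OF t1] M[OF t2] P[OF t1] P[OF t2] E[OF t1] E[OF t2]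
      using c1 c2 c3 t1 t2 by simp
  qed
qed

end


theorem theorem2p1:
  fixes a b :: real and k :: nat and I :: "real set" and u :: "real \<Rightarrow> real \<Rightarrow> real"
  assumes ab: "a < b"
    and I_open: "open I" and I_interval: "is_interval I" and I_ne: "I \<noteq> {}"
    and u_Tk: "\<And>t. t \<in> I \<Longrightarrow> trig_poly a b k (u t)"
    and u_ode: "\<And>t x. t \<in> I \<Longrightarrow>
                  ((\<lambda>s. u s x) has_real_derivative bbm_rhs a b k (u t) x) (at t)"
    and u_C1: "\<And>x. continuous_on I (\<lambda>t. bbm_rhs a b k (u t) x)"
  shows "\<forall>t1\<in>I. \<forall>t2\<in>I.
           bbm_mass a b (u t1) = bbm_mass a b (u t2) \<and>
           bbm_momentum a b (u t1) = bbm_momentum a b (u t2) \<and>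
           bbm_energy a b (u t1) = bbm_energy a b (u t2)"
proof -
  interpret bbm a b k by unfold_locales (rule ab)
  show ?thesis by (rule main[OF I_open I_interval u_Tk u_ode u_C1])
qed

end
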